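(* Let $V$, $J$, $\Delta_{\mathbf u,\mathbf v}$, $\phi^+_{\mathbf u}$, $\phi^-_{\mathbf u}$ be as in the context, and say an action $\mathbf u$ is optimal at $\mathbf Q$ if $\mathbf u\in\arg\min_{\mathbf v\in\mathcal U}J(\mathbf Q,\mathbf v)$. Then: (1) Let $\mathbf 0\in\mathcal U$ be the all-zero action and $\mathcal Q_0=\{\mathbf Q\in\mathcal Q: Q_{n,m}\le\phi^+_{\mathbf 0}(\mathbf Q_{-n,-m})\ \forall n\in\mathcal N,\ m\in\mathcal M_n\}$. For every $\mathbf Q\in\mathcal Q_0$, $\Delta_{\mathbf 0,\mathbf v}(\mathbf Q)\le 0$ for all $\mathbf v\in\mathcal U$, so $\mathbf 0$ is optimal at $\mathbf Q$. (2) Let $\mathbf u\in\mathcal U$ with $u_n=m\in\mathcal M_n$ for some $n\in\mathcal N$. Then for every $\mathbf Q\in\mathcal Q$ with $Q_{n,m}\ge\phi^-_{\mathbf u}(\mathbf Q_{-n,-m})$ we have $\Delta_{\mathbf u,\mathbf v}(\mathbf Q)\le0$ for all $\mathbf v\in\mathcal U$, so $\mathbf u$ is optimal at $\mathbf Q$. Moreover, if $u_0=m\in\mathcal M_0$, then $\phi^-_{\mathbf u}(\mathbf Q_{-0,-m})$ is monotonically non-increasing in $Q_{n,m}$ for every $n\in\mathcal N_m$ (all other components held fixed).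
   Context: Model. Let $N\ge 1$, $\mathcal N=\{0,1,\dots,N\}$ (base station $0$ is the macro base station, MBS) and $\mathcal N^+=\{1,\dots,N\}$ (small base stations, SBSs). Let $\mathcal M=\{1,\dots,M\}$ be the set of contents. For each $n\in\mathcal N$ let $\mathcal M_n\subseteq\mathcal M$ be the set of contents cached at BS $n$, with $\mathcal M_0=\mathcal M$; put $\tilde{\mathcal M}_n=\mathcal M_n\cup\{0\}$ and $\mathcal N_m=\{n\in\mathcal N^+: m\in\mathcal M_n\}$. Powers $p(n,m)\ge 0$ are given for $n\in\mathcal N$, $m\in\mathcal M_n$, and $p(n,0)=0$. A weight $w\ge 0$ is fixed. The feasible action space is $\mathcal U=\{\mathbf u=(u_n)_{n\in\mathcal N}: u_n\in\tilde{\mathcal M}_n\ \forall n,\ u_0\sum_{n\in\mathcal N^+}u_n=0\}$. A state is $\mathbf Q=(Q_{n,m})_{n\in\mathcal N,m\in\mathcal M_n}$ with $Q_{n,m}\in\mathcal Q_{n,m}=\{0,1,\dots,N_{n,m}\}$ for given positive integers $N_{n,m}$; $\mathcal Q=\prod_{n\in\mathcal N}\prod_{m\in\mathcal M_n}\mathcal Q_{n,m}$. Arrivals $A_{n,m}$ ($n\in\mathcal N$, $m\in\mathcal M$) are mutually independent nonnegative-integer random variables with fixed distributions, i.i.d. across time slots; $\tilde A_{0,m}=A_{0,m}+\sum_{n\in\mathcal N^+\setminus\mathcal N_m}A_{n,m}$. Given state $\mathbf Q$ and action $\mathbf u$, the next state $\mathbf Q'$ is $Q'_{0,m}=\min\{\mathbf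 1(u_0\neq m)Q_{0,m}+\tilde A_{0,m},N_{0,m}\}$ for $m\in\mathcal M_0$ and $Q'_{n,m}=\min\{\mathbf 1(u_0\neq m\text{ and }u_n\neq m)Q_{n,m}+A_{n,m},N_{n,m}\}$ for $n\in\mathcal N^+$, $m\in\mathcal M_n$; $\mathbb E$ denotes expectation over the arrivals. The per-stage cost is $g(\mathbf Q,\mathbf u)=d(\mathbf Q)+w\,p(\mathbf u)$ with $d(\mathbf Q)=\sum_{n\in\mathcal N}\sum_{m\in\mathcal M_n}Q_{n,m}$ and $p(\mathbf u)=\sum_{n\in\mathcal N}p(n,u_n)$. Value function. Fix a reference state $\mathbf Q^\dagger\in\mathcal Q$. Relative value iteration: $V_0\equiv 0$, $J_{l+1}(\mathbf Q,\mathbf u)=g(\mathbf Q,\mathbf u)+\mathbb E[V_l(\mathbf Q')]$, and $V_{l+1}(\mathbf Q)=\min_{\mathbf u\in\mathcal U}J_{l+1}(\mathbf Q,\mathbf u)-\min_{\mathbf u\in\mathcal U}J_{l+1}(\mathbf Q^\dagger,\mathbf u)$ for $l\ge0$. It is assumed (standing assumption of the paper, guaranteed under its unichain conditions) that $V_l$ converges pointwise to a function $V:\mathcal Q\to\mathbb R$; this $V$ is the value function, which solves the Bellman equation $\theta+V(\mathbf Q)=\min_{\mathbf u\in\mathcal U}\{g(\mathbf Q,\mathbf u)+\mathbb E[V(\mathbf Q')]\}$ for all $\mathbf Q$, and optimal policies choose actions in $\arg\min_{\mathbf u}J(\mathbf Q,\mathbf u)$. Further notation. $J(\mathbf Q,\mathbf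 u)=g(\mathbf Q,\mathbf u)+\mathbb E[V(\mathbf Q')]$ and $\Delta_{\mathbf u,\mathbf v}(\mathbf Q)=J(\mathbf Q,\mathbf u)-J(\mathbf Q,\mathbf v)$. For $(n,m)$ with $m\in\mathcal M_n$, $\mathbf Q_{-n,-m}=(Q_{i,j})_{(i,j)\neq(n,m)}$, and $(Q_{n,m},\mathbf Q_{-n,-m})$ denotes the full state. Define $\Phi_{\mathbf u}(\mathbf Q_{-n,-m})=\{Q_{n,m}\in\mathcal Q_{n,m}: \Delta_{\mathbf u,\mathbf v}(Q_{n,m},\mathbf Q_{-n,-m})\le0\ \forall\mathbf v\in\mathcal U,\ \mathbf v\ne\mathbf u\}$, $\phi^+_{\mathbf u}(\mathbf Q_{-n,-m})=\max\Phi_{\mathbf u}(\mathbf Q_{-n,-m})$ if this set is nonempty and $-\infty$ otherwise, and $\phi^-_{\mathbf u}(\mathbf Q_{-n,-m})=\min\Phi_{\mathbf u}(\mathbf Q_{-n,-m})$ if nonempty and $+\infty$ otherwise. *)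

theory Defs
  imports "HOL-Probability.Probability"
begin

text \<open>Base stations are indexed 0..NN (0 = MBS), contents 1..MM.
 Ms n = set of contents cached at BS n; Ncap n m = buffer bound N_{n,m};
 dist n m = distribution of arrivals A_{n,m}; pw n m = power p(n,m); wt = weight w.\<close>
record mdp =
  NN :: nat
  MM :: nat
  Ms :: "nat \<Rightarrow> nat set"
  Ncap :: "nat \<Rightarrow> nat \<Rightarrow> nat"
  dist :: "nat \<Rightarrow> nat \<Rightarrow> nat pmf"
  pw :: "nat \<Rightarrow> nat \<Rightarrow> real"
  wt :: real

type_synonym state = "nat \<Rightarrow> nat \<Rightarrow> nat"   (* Q n m; 0 outside valid indices *)
type_synonym action = "nat \<Rightarrow> nat"           (* u n; 0 for n > NN *)
type_synonym arrival = "nat \<Rightarrow> nat \<Rightarrow> nat"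

definition valid_mdp :: "mdp \<Rightarrow> bool" where
  "valid_mdp S \<longleftrightarrow>
     NN S \<ge> 1 \<and>
     Ms S 0 = {1..MM S} \<and>
     (\<forall>n\<in>{1..NN S}. Ms S n \<subseteq> {1..MM S}) \<and>
     (\<forall>n\<le>NN S. \<forall>m\<in>Ms S n. Ncap S n m > 0) \<and>
     (\<forall>n\<le>NN S. \<forall>m\<in>Ms S n. pw S n m \<ge> 0) \<and>
     (\<forall>n\<le>NN S. pw S n 0 = 0) \<and>
     wt S \<ge> 0"

definition idx :: "mdp \<Rightarrow> nat \<Rightarrow> nat \<Rightarrow> bool" where
  "idx S n m \<longleftrightarrow> n \<le> NN S \<and> m \<in> Ms S n"

definition Uset :: "mdp \<Rightarrow> action set" where
  "Uset S = {u. (\<forall>n\<le>NN S. u n \<in> Ms S n \<union> {0}) \<and> (\<forall>n. n > NN S \<longrightarrow> u n = 0)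
               \<and> u 0 * (\<Sum>n\<in>{1..NN S}. u n) = 0}"

definition Qset :: "mdp \<Rightarrow> state set" where
  "Qset S = {Q. \<forall>n m. (idx S n m \<longrightarrow> Q n m \<le> Ncap S n m) \<and> (\<not> idx S n m \<longrightarrow> Q n m = 0)}"

definition Nm :: "mdp \<Rightarrow> nat \<Rightarrow> nat set" where
  "Nm S m = {n\<in>{1..NN S}. m \<in> Ms S n}"

definition Atil :: "mdp \<Rightarrow> arrival \<Rightarrow> nat \<Rightarrow> nat" where
  "Atil S a m = a 0 m + (\<Sum>n\<in>{1..NN S} - Nm S m. a n m)"

definition nxt :: "mdp \<Rightarrow> state \<Rightarrow> action \<Rightarrow> arrival \<Rightarrow> state" where
  "nxt S Q u a = (\<lambda>n m.
     if idx S n m then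
       (if n = 0 then min ((if u 0 \<noteq> m then Q 0 m else 0) + Atil S a m) (Ncap S 0 m)
        else min ((if u 0 \<noteq> m \<and> u n \<noteq> m then Q n m else 0) + a n m) (Ncap S n m))
     else 0)"

definition arrivals :: "mdp \<Rightarrow> arrival pmf" where
  "arrivals S = map_pmf (\<lambda>f n m. f (n, m))
      (Pi_pmf ({0..NN S} \<times> {1..MM S}) 0 (\<lambda>(n, m). dist S n m))"

definition dcost :: "mdp \<Rightarrow> state \<Rightarrow> real" where
  "dcost S Q = (\<Sum>n\<in>{0..NN S}. \<Sum>m\<in>Ms S n. real (Q n m))"

definition pcost :: "mdp \<Rightarrow> action \<Rightarrow> real" where
  "pcost S u = (\<Sum>n\<in>{0..NN S}. pw S n (u n))"

definition gcost :: "mdp \<Rightarrow> state \<Rightarrow> action \<Rightarrow> real" where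
  "gcost S Q u = dcost S Q + wt S * pcost S u"

definition Jfun :: "mdp \<Rightarrow> (state \<Rightarrow> real) \<Rightarrow> state \<Rightarrow> action \<Rightarrow> real" where
  "Jfun S V Q u = gcost S Q u + measure_pmf.expectation (arrivals S) (\<lambda>a. V (nxt S Q u a))"

primrec RVI :: "mdp \<Rightarrow> state \<Rightarrow> nat \<Rightarrow> state \<Rightarrow> real" where
  "RVI S Qdag 0 = (\<lambda>Q. 0)"
| "RVI S Qdag (Suc l) = (\<lambda>Q. Min ((Jfun S (RVI S Qdag l) Q) ` Uset S)
                              - Min ((Jfun S (RVI S Qdag l) Qdag) ` Uset S))"

definition Delta :: "mdp \<Rightarrow> (state \<Rightarrow> real) \<Rightarrow> action \<Rightarrow> action \<Rightarrow> state \<Rightarrow> real" where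
  "Delta S V u v Q = Jfun S V Q u - Jfun S V Q v"

definition is_optimal :: "mdp \<Rightarrow> (state \<Rightarrow> real) \<Rightarrow> state \<Rightarrow> action \<Rightarrow> bool" where
  "is_optimal S V Q u \<longleftrightarrow> u \<in> Uset S \<and> (\<forall>v\<in>Uset S. Jfun S V Q u \<le> Jfun S V Q v)"

text \<open>Replace the (n,m) component of Q by x: the state (x, Q_{-n,-m}).\<close>
definition upd :: "state \<Rightarrow> nat \<Rightarrow> nat \<Rightarrow> nat \<Rightarrow> state" where
  "upd Q n m x = Q(n := (Q n)(m := x))"

text \<open>Phi_u(Q_{-n,-m}); only the components of Q other than (n,m) matter.\<close>
definition Phi :: "mdp \<Rightarrow> (state \<Rightarrow> real) \<Rightarrow> action \<Rightarrow> nat \<Rightarrow> nat \<Rightarrow> state \<Rightarrow> nat set" where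
  "Phi S V u n m Q = {x\<in>{0..Ncap S n m}.
       \<forall>v\<in>Uset S. v \<noteq> u \<longrightarrow> Delta S V u v (upd Q n m x) \<le> 0}"

definition phi_plus :: "mdp \<Rightarrow> (state \<Rightarrow> real) \<Rightarrow> action \<Rightarrow> nat \<Rightarrow> nat \<Rightarrow> state \<Rightarrow> ereal" where
  "phi_plus S V u n m Q = (if Phi S V u n m Q \<noteq> {} then ereal (real (Max (Phi S V u n m Q))) else -\<infinity>)"

definition phi_minus :: "mdp \<Rightarrow> (state \<Rightarrow> real) \<Rightarrow> action \<Rightarrow> nat \<Rightarrow> nat \<Rightarrow> state \<Rightarrow> ereal" where
  "phi_minus S V u n m Q = (if Phi S V u n m Q \<noteq> {} then ereal (real (Min (Phi S V u n m Q))) else \<infinity>)"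

definition zero_action :: action where
  "zero_action = (\<lambda>n. 0)"

definition Q0set :: "mdp \<Rightarrow> (state \<Rightarrow> real) \<Rightarrow> state set" where
  "Q0set S V = {Q\<in>Qset S. \<forall>n\<le>NN S. \<forall>m\<in>Ms S n.
                  ereal (real (Q n m)) \<le> phi_plus S V zero_action n m Q}"

end

theory Submission
  imports Defs
begin

definition monoQ :: "mdp \<Rightarrow> (state \<Rightarrow> real) \<Rightarrow> bool" where
  "monoQ S W \<longleftrightarrow> (\<forall>Q\<in>Qset S. \<forall>Q'\<in>Qset S. (\<forall>n m. Q n m \<le> Q' n m) \<longrightarrow> W Q \<le> W Q')"

lemma nxt_Qset: "nxt S Q w a \<in> Qset S"
  unfolding nxt_def Qset_def by auto

lemma nxt_mono: "(\<forall>n m. Q1 n m \<le> Q2 n m) \<Longrightarrow> nxt S Q1 w a k j \<le> nxt S Q2 w a k j"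
proof -
  assume h: "\<forall>n m. Q1 n m \<le> Q2 n m"
  then have "Q1 k j \<le> Q2 k j" "Q1 0 j \<le> Q2 0 j" by auto
  then show ?thesis unfolding nxt_def by (auto intro: min.mono)
qed

lemma integ:
  assumes "monoQ S W"
  shows "integrable (measure_pmf (arrivals S)) (\<lambda>a. W (nxt S Q w a))"
proof -
  define Qmx :: state where "Qmx = (\<lambda>n m. if idx S n m then Ncap S n m else 0)"
  have z: "(\<lambda>_ _. 0) \<in> Qset S" "Qmx \<in> Qset S" unfolding Qset_def Qmx_def by auto
  have b: "norm (W (nxt S Q w a)) \<le> \<bar>W (\<lambda>_ _. 0)\<bar> + \<bar>W Qmx\<bar>" for a
  proof -
    have "W (\<lambda>_ _. 0) \<le> W (nxt S Q w a)"
      using assms z nxt_Qset unfolding monoQ_def by auto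
    moreover have "W (nxt S Q w a) \<le> W Qmx"
      using assms z nxt_Qset[of S Q w a] unfolding monoQ_def
      by (auto simp: Qmx_def Qset_def)
    ultimately show ?thesis by auto
  qed
  show ?thesis
    by (rule measure_pmf.integrable_const_bound[where B="\<bar>W (\<lambda>_ _. 0)\<bar> + \<bar>W Qmx\<bar>"])
       (use b in auto)
qed

lemma expect_mono:
  assumes "monoQ S W" "\<forall>n m. Q1 n m \<le> Q2 n m"
  shows "measure_pmf.expectation (arrivals S) (\<lambda>a. W (nxt S Q1 w a))
       \<le> measure_pmf.expectation (arrivals S) (\<lambda>a. W (nxt S Q2 w a))"
  apply (rule integral_mono)
  using assms nxt_Qset nxt_mono integ unfolding monoQ_def by blast+

lemma finite_Uset:
  assumes "valid_mdp S" shows "finite (Uset S)"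
proof -
  have fin: "finite (Ms S n)" if "n \<le> NN S" for n
  proof (cases "n = 0")
    case True then show ?thesis using assms by (simp add: valid_mdp_def)
  next
    case False then have "Ms S n \<subseteq> {1..MM S}" using assms that by (auto simp: valid_mdp_def)
    then show ?thesis using finite_subset by blast
  qed
  have inj: "inj_on (\<lambda>u. restrict u {0..NN S}) (Uset S)"
  proof (rule inj_onI)
    fix u v assume u: "u \<in> Uset S" and v: "v \<in> Uset S"
      and e: "restrict u {0..NN S} = restrict v {0..NN S}"
    show "u = v"
    proof
      fix n show "u n = v n"
      proof (cases "n \<le> NN S")
        case True then show ?thesis using fun_cong[OF e, of n] by simp
      next
        case False then show ?thesis using u v by (auto simp: Uset_def)
      qed
    qed
  qed
  have "(\<lambda>u. restrict u {0..NN S}) ` Uset S \<subseteq> PiE {0..NN S} (\<lambda>n. insert 0 (Ms S n))"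
    by (auto simp: Uset_def)
  moreover have "finite (PiE {0..NN S} (\<lambda>n. insert 0 (Ms S n)))"
    by (rule finite_PiE) (auto simp: fin)
  ultimately show ?thesis using finite_imageD[OF _ inj] finite_subset by blast
qed

lemma UsetD: "v \<in> Uset S \<Longrightarrow> v n \<noteq> 0 \<Longrightarrow> n \<le> NN S \<and> v n \<in> Ms S n"
proof -
  assume v: "v \<in> Uset S" and vn: "v n \<noteq> 0"
  have "\<forall>n. n > NN S \<longrightarrow> v n = 0" "\<forall>n\<le>NN S. v n \<in> Ms S n \<union> {0}" using v unfolding Uset_def by blast+
  then show ?thesis using vn by (meson UnE not_le singletonD)
qed

lemma zero_Uset: "zero_action \<in> Uset S"
  unfolding Uset_def zero_action_def by simp

lemma dcost_mono: "(\<forall>n m. Q1 n m \<le> Q2 n m) \<Longrightarrow> dcost S Q1 \<le> dcost S Q2"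
  unfolding dcost_def by (intro sum_mono) auto

lemma RVI_mono:
  assumes "valid_mdp S" shows "monoQ S (RVI S Qdag l)"
proof (induction l)
  case 0 then show ?case by (simp add: monoQ_def)
next
  case (Suc l)
  show ?case unfolding monoQ_def
  proof (intro ballI impI)
    fix Q Q' assume Q: "Q \<in> Qset S" "Q' \<in> Qset S" and le: "\<forall>n m. Q n m \<le> Q' n m"
    let ?J = "Jfun S (RVI S Qdag l)"
    have J: "?J Q u \<le> ?J Q' u" for u
      unfolding Jfun_def gcost_def
      using dcost_mono[OF le, of S] expect_mono[OF Suc le, of u] by linarith
    have fU: "finite (Uset S)" using finite_Uset[OF assms] .
    have "Min (?J Q' ` Uset S) \<in> ?J Q' ` Uset S"
      using fU zero_Uset by (intro Min_in) auto
    then obtain u0 where u0: "u0 \<in> Uset S" "Min (?J Q' ` Uset S) = ?J Q' u0" by auto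
    have "Min (?J Q ` Uset S) \<le> ?J Q u0" using fU u0 by (intro Min_le) auto
    then show "RVI S Qdag (Suc l) Q \<le> RVI S Qdag (Suc l) Q'"
      using J[of u0] u0 by simp
  qed
qed

lemma V_mono:
  assumes "valid_mdp S" and conv: "\<forall>Q\<in>Qset S. (\<lambda>l. RVI S Qdag l Q) \<longlonglongrightarrow> V Q"
  shows "monoQ S V"
  unfolding monoQ_def
proof (intro ballI impI)
  fix Q Q' assume Q: "Q \<in> Qset S" "Q' \<in> Qset S" and le: "\<forall>n m. Q n m \<le> Q' n m"
  show "V Q \<le> V Q'"
    apply (rule LIMSEQ_le[OF conv[rule_format, OF Q(1)] conv[rule_format, OF Q(2)]])
    using RVI_mono[OF assms(1)] Q le unfolding monoQ_def by blast
qed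

lemma delta_le:
  assumes "monoQ S W" "\<forall>k j. Q1 k j \<le> Q2 k j" "\<And>a. nxt S Q1 u a = nxt S Q2 u a"
  shows "Delta S W u v Q2 \<le> Delta S W u v Q1"
  unfolding Delta_def Jfun_def gcost_def
  using expect_mono[OF assms(1,2), of v] assms(3) by simp

lemma nxt_clear:
  assumes "\<forall>k j. (k, j) \<noteq> (n, m) \<longrightarrow> Q1 k j = Q2 k j" "w 0 = m \<or> w n = m"
  shows "nxt S Q1 w a = nxt S Q2 w a"
proof (intro ext)
  fix k j
  show "nxt S Q1 w a k j = nxt S Q2 w a k j"
  proof (cases "(k, j) = (n, m)")
    case True then show ?thesis using assms(2) unfolding nxt_def by auto
  next
    case False
    then have e: "Q1 k j = Q2 k j" using assms(1) by auto
    show ?thesis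
    proof (cases "k = 0")
      case True then show ?thesis using e unfolding nxt_def by simp
    next
      case False then show ?thesis using e unfolding nxt_def by simp
    qed
  qed
qed

lemma upd_same: "upd Q n m (Q n m) = Q"
  unfolding upd_def by auto

theorem theorem1:
  fixes S :: mdp and Qdag :: state and V :: "state \<Rightarrow> real"
  assumes valid: "valid_mdp S"
    and ref: "Qdag \<in> Qset S"
    and conv: "\<forall>Q\<in>Qset S. (\<lambda>l. RVI S Qdag l Q) \<longlonglongrightarrow> V Q"
  shows "(\<forall>Q\<in>Q0set S V.
            (\<forall>v\<in>Uset S. Delta S V zero_action v Q \<le> 0) \<and> is_optimal S V Q zero_action)
       \<and> (\<forall>u\<in>Uset S. \<forall>n\<le>NN S. \<forall>m\<in>Ms S n. u n = m \<longrightarrow>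
            (\<forall>Q\<in>Qset S. ereal (real (Q n m)) \<ge> phi_minus S V u n m Q \<longrightarrow>
               (\<forall>v\<in>Uset S. Delta S V u v Q \<le> 0) \<and> is_optimal S V Q u))
       \<and> (\<forall>u\<in>Uset S. \<forall>m\<in>Ms S 0. u 0 = m \<longrightarrow>
            (\<forall>Q\<in>Qset S. \<forall>n\<in>Nm S m. \<forall>x y. x \<le> y \<longrightarrow> y \<le> Ncap S n m \<longrightarrow>
               phi_minus S V u 0 m (upd Q n m y) \<le> phi_minus S V u 0 m (upd Q n m x)))"
proof (intro conjI)
  have mV: "monoQ S V" using V_mono[OF valid conv] .
  have finPhi: "finite (Phi S V u n m Q)" for u n m Q
    unfolding Phi_def by simp
  have updle: "\<forall>k j. upd Q n m x k j \<le> upd Q n m y k j" if "x \<le> y" for Q n m x y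
    using that unfolding upd_def by auto
  have upddiff: "\<forall>k j. (k, j) \<noteq> (n, m) \<longrightarrow> upd Q n m x k j = upd Q n m y k j" for Q n m x y
    unfolding upd_def by auto
  show "\<forall>Q\<in>Q0set S V.
            (\<forall>v\<in>Uset S. Delta S V zero_action v Q \<le> 0) \<and> is_optimal S V Q zero_action"
  proof (intro ballI)
    fix Q assume Q: "Q \<in> Q0set S V"
    have D: "Delta S V zero_action v Q \<le> 0" if v: "v \<in> Uset S" for v
    proof (cases "v = zero_action")
      case True then show ?thesis by (simp add: Delta_def)
    next
      case False
      then obtain n where vn: "v n \<noteq> 0" unfolding zero_action_def by auto
      have nN: "n \<le> NN S" using UsetD[OF v vn] by simp
      define m where "m = v n"
      have mM: "m \<in> Ms S n" using UsetD[OF v vn] m_def by simp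
      have "ereal (real (Q n m)) \<le> phi_plus S V zero_action n m Q"
        using Q nN mM unfolding Q0set_def by blast
      then have ne: "Phi S V zero_action n m Q \<noteq> {}"
        and qle: "Q n m \<le> Max (Phi S V zero_action n m Q)"
        unfolding phi_plus_def by (auto split: if_splits)
      define y where "y = Max (Phi S V zero_action n m Q)"
      have "y \<in> Phi S V zero_action n m Q" using ne finPhi y_def by simp
      then have "Delta S V zero_action v (upd Q n m y) \<le> 0"
        using v False unfolding Phi_def by auto
      moreover have "Delta S V v zero_action (upd Q n m y) \<le> Delta S V v zero_action (upd Q n m (Q n m))"
        by (rule delta_le[OF mV updle nxt_clear[OF upddiff]]) (use qle y_def m_def in auto)
      ultimately show ?thesis using upd_same[of Q n m] unfolding Delta_def by simp
    qed
    show "(\<forall>v\<in>Uset S. Delta S V zero_action v Q \<le> 0) \<and> is_optimal S V Q zero_action"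
      using D zero_Uset unfolding is_optimal_def Delta_def by auto
  qed
  show "\<forall>u\<in>Uset S. \<forall>n\<le>NN S. \<forall>m\<in>Ms S n. u n = m \<longrightarrow>
            (\<forall>Q\<in>Qset S. ereal (real (Q n m)) \<ge> phi_minus S V u n m Q \<longrightarrow>
               (\<forall>v\<in>Uset S. Delta S V u v Q \<le> 0) \<and> is_optimal S V Q u)"
  proof (intro ballI allI impI)
    fix u n m Q assume u: "u \<in> Uset S" and nN: "n \<le> NN S" and mM: "m \<in> Ms S n"
      and um: "u n = m" and Q: "Q \<in> Qset S"
      and ph: "ereal (real (Q n m)) \<ge> phi_minus S V u n m Q"
    then have ne: "Phi S V u n m Q \<noteq> {}"
        and qle: "Min (Phi S V u n m Q) \<le> Q n m"
      unfolding phi_minus_def by (auto split: if_splits)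
    define x where "x = Min (Phi S V u n m Q)"
    have xin: "x \<in> Phi S V u n m Q" using ne finPhi x_def by simp
    have D: "Delta S V u v Q \<le> 0" if v: "v \<in> Uset S" for v
    proof (cases "v = u")
      case True then show ?thesis by (simp add: Delta_def)
    next
      case False
      have "Delta S V u v (upd Q n m x) \<le> 0"
        using xin v False unfolding Phi_def by auto
      moreover have "Delta S V u v (upd Q n m (Q n m)) \<le> Delta S V u v (upd Q n m x)"
        by (rule delta_le[OF mV updle nxt_clear[OF upddiff]]) (use qle x_def um in auto)
      ultimately show ?thesis using upd_same[of Q n m] by simp
    qed
    show "(\<forall>v\<in>Uset S. Delta S V u v Q \<le> 0) \<and> is_optimal S V Q u"
      using D u unfolding is_optimal_def Delta_def by auto
  qed
  show "\<forall>u\<in>Uset S. \<forall>m\<in>Ms S 0. u 0 = m \<longrightarrow>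
            (\<forall>Q\<in>Qset S. \<forall>n\<in>Nm S m. \<forall>x y. x \<le> y \<longrightarrow> y \<le> Ncap S n m \<longrightarrow>
               phi_minus S V u 0 m (upd Q n m y) \<le> phi_minus S V u 0 m (upd Q n m x))"
  proof (intro ballI allI impI)
    fix u m Q n x y assume u: "u \<in> Uset S" and mM: "m \<in> Ms S 0" and um: "u 0 = m"
      and Q: "Q \<in> Qset S" and n: "n \<in> Nm S m" and xy: "x \<le> y" and yN: "y \<le> Ncap S n m"
    have n0: "n \<noteq> 0" using n unfolding Nm_def by auto
    have sub: "Phi S V u 0 m (upd Q n m x) \<subseteq> Phi S V u 0 m (upd Q n m y)"
    proof
      fix z assume z: "z \<in> Phi S V u 0 m (upd Q n m x)"
      let ?A = "upd (upd Q n m x) 0 m z" and ?B = "upd (upd Q n m y) 0 m z"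
      have le: "\<forall>k j. ?A k j \<le> ?B k j" using xy unfolding upd_def by auto
      have df: "\<forall>k j. (k, j) \<noteq> (n, m) \<longrightarrow> ?A k j = ?B k j" unfolding upd_def by auto
      have "Delta S V u v ?B \<le> Delta S V u v ?A" for v
        by (rule delta_le[OF mV le nxt_clear[OF df]]) (use um in auto)
      then show "z \<in> Phi S V u 0 m (upd Q n m y)"
        using z unfolding Phi_def by (auto intro: order_trans)
    qed
    show "phi_minus S V u 0 m (upd Q n m y) \<le> phi_minus S V u 0 m (upd Q n m x)"
    proof (cases "Phi S V u 0 m (upd Q n m x) = {}")
      case True then show ?thesis by (simp add: phi_minus_def)
    next
      case False
      then have "Phi S V u 0 m (upd Q n m y) \<noteq> {}" using sub by auto
      moreover have "Min (Phi S V u 0 m (upd Q n m y)) \<le> Min (Phi S V u 0 m (upd Q n m x))"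
        using Min_antimono[OF sub False finPhi] .
      ultimately show ?thesis using False by (simp add: phi_minus_def)
    qed
  qed
qed

end
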